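(* As formal power series in $t$ (with coefficients polynomials in $x$), \[ \frac{(1-t)^3}{(1-t)^4-xt(t+1)^2}=1+\sum_{m=1}^{\infty}H_m^{(2)}(x)\,t^m . \]
   Context: For integers $m\ge0$, $n\ge1$, let $\theta_m=2\pi/(2m+1)$ and $H_m^{(n)}(x)=\prod_{k=1}^{m}\big(x+(2\cos k\theta_m+2)^n\big)$ (so $H_0^{(n)}=1$). *)

theory Defs
  imports Complex_Main "HOL-Computational_Algebra.Polynomial" "HOL-Computational_Algebra.Formal_Power_Series"
begin

definition theta :: "nat \<Rightarrow> real" where
  "theta m = 2 * pi / (2 * real m + 1)"

definition H :: "nat \<Rightarrow> nat \<Rightarrow> real poly" where
  "H m n = (\<Prod>k\<in>{1..m}. [: (2 * cos (real k * theta m) + 2) ^ n, 1 :])"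

end

theory Submission imports Defs begin

unbundle fps_syntax

fun P :: "nat \<Rightarrow> real poly" where
  "P 0 = 1"
| "P (Suc 0) = [:-1, 1:]"
| "P (Suc (Suc n)) = [:-2, 1:] * P (Suc n) - P n"

lemma P_deg: "degree (P n) \<le> n \<and> coeff (P n) n = 1"
proof (induction n rule: P.induct)
  case 1 then show ?case by simp
next
  case 2 then show ?case by simp
next
  case (3 n)
  have "degree ([:-2, 1:] * P (Suc n)) \<le> 1 + degree (P (Suc n))" using degree_mult_le[of "[:-2,1:]" "P (Suc n)"] by simp
  hence dA: "degree ([:-2, 1:] * P (Suc n)) \<le> Suc (Suc n)" using 3 by simp
  have dB: "degree (P n) \<le> Suc (Suc n)" using 3 by simp
  have "degree (P (Suc (Suc n))) \<le> Suc (Suc n)"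
    using degree_diff_le[OF dA dB] by simp
  moreover have "coeff (P n) (Suc (Suc n)) = 0" using 3 by (simp add: coeff_eq_0)
  moreover have "coeff (P (Suc n)) (Suc (Suc n)) = 0" using 3 by (simp add: coeff_eq_0)
  ultimately show ?case using 3 by (simp add: mult_pCons_left coeff_pCons)
qed

lemma P_sin: "sin a * poly (P n) (2 + 2 * cos (2*a)) = sin ((2 * real n + 1) * a)"
proof (induction n rule: P.induct)
  case 1 then show ?case by simp
next
  case 2
  have "sin (3*a) = sin (a + 2*a)" by simp
  also have "\<dots> = sin a * cos (2*a) + cos a * sin (2*a)" by (rule sin_add)
  also have "\<dots> = sin a * (2 * cos a ^ 2 - 1) + cos a * (2 * sin a * cos a)"
    by (simp only: sin_double cos_double_cos)
  also have "\<dots> = sin a * (2 * cos (2*a) + 1)"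
    by (simp only: cos_double_cos) (simp add: algebra_simps power2_eq_square)
  finally show ?case by (simp add: algebra_simps)
next
  case (3 n)
  have e: "sin ((2 * real n + 5) * a) + sin ((2 * real n + 1) * a) = 2 * cos (2*a) * sin ((2 * real n + 3) * a)"
  proof -
    have "sin ((2 * real n + 5) * a) = sin ((2 * real n + 3) * a + 2*a)" by (simp add: algebra_simps)
    moreover have "sin ((2 * real n + 1) * a) = sin ((2 * real n + 3) * a - 2*a)" by (simp add: algebra_simps)
    ultimately show ?thesis by (simp add: sin_add sin_diff)
  qed
  have "sin a * poly (P (Suc (Suc n))) (2 + 2 * cos (2*a)) =
     2 * cos (2*a) * (sin a * poly (P (Suc n)) (2 + 2 * cos (2*a))) - sin a * poly (P n) (2 + 2 * cos (2*a))"
    by (simp add: algebra_simps)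
  also have "\<dots> = 2 * cos (2*a) * sin ((2 * real n + 3) * a) - sin ((2 * real n + 1) * a)"
    using 3 by (simp add: algebra_simps)
  also have "\<dots> = sin ((2 * real (Suc (Suc n)) + 1) * a)" using e by (simp add: algebra_simps)
  finally show ?case .
qed

definition cc :: "nat \<Rightarrow> nat \<Rightarrow> real" where
  "cc m k = 2 * cos (real k * theta m) + 2"

lemma P_root:
  assumes "1 \<le> k" "k \<le> m"
  shows "poly (P m) (cc m k) = 0"
proof -
  define a where "a = real k * pi / (2 * real m + 1)"
  have a2: "2 * a = real k * theta m" unfolding a_def theta_def by simp
  have "0 < a" unfolding a_def using assms by simp
  moreover have "a < pi"
  proof -
    have "real k * pi < (2 * real m + 1) * pi" by (rule mult_strict_right_mono) (use assms in simp_all)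
    thus ?thesis unfolding a_def by (simp add: divide_less_eq)
  qed
  ultimately have s: "sin a \<noteq> 0" using sin_gt_zero by fastforce
  have "(2 * real m + 1) * a = real k * pi" unfolding a_def by simp
  hence "sin a * poly (P m) (2 + 2 * cos (2*a)) = 0" using P_sin[of a m] by simp
  with s have "poly (P m) (2 + 2 * cos (2*a)) = 0" by simp
  thus ?thesis unfolding cc_def a2 by (simp add: add.commute)
qed

lemma cc_inj: "inj_on (cc m) {1..m}"
proof
  fix k l assume k: "k \<in> {1..m}" and l: "l \<in> {1..m}" and e: "cc m k = cc m l"
  have b: "real j * theta m \<le> pi" if "j \<le> m" for j
  proof -
    have "real j * theta m = 2 * real j * pi / (2 * real m + 1)" unfolding theta_def by simp
    also have "\<dots> \<le> pi"
    proof -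
      have "2 * real j * pi \<le> (2 * real m + 1) * pi" by (rule mult_right_mono) (use that in simp_all)
      thus ?thesis by (simp add: divide_le_eq)
    qed
    finally show ?thesis .
  qed
  have t0: "theta m > 0" unfolding theta_def by simp
  have "real k * theta m = real l * theta m"
    apply (rule cos_inj_pi)
    using k l b t0 e by (auto simp: cc_def)
  thus "k = l" using t0 by simp
qed

lemma P_prod: "P m = (\<Prod>k\<in>{1..m}. [:-cc m k, 1:])"
proof (rule poly_eqI_degree_lead_coeff[where n=m and A="cc m ` {1..m}"])
  have dg: "degree (\<Prod>k\<in>{1..m}. [:-cc m k, 1:]) = m"
    by (subst degree_prod_sum_eq) auto
  have "lead_coeff (\<Prod>k\<in>{1..m}. [:-cc m k, 1:]) = 1"
    by (simp add: lead_coeff_prod)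
  then show "coeff (P m) m = coeff (\<Prod>k\<in>{1..m}. [:-cc m k, 1:]) m"
    using P_deg[of m] dg by simp
  show "m \<le> card (cc m ` {1..m})" using card_image[OF cc_inj] by simp
  show "degree (P m) \<le> m" using P_deg by simp
  show "degree (\<Prod>k\<in>{1..m}. [:-cc m k, 1:]) \<le> m" using dg by simp
  fix z assume "z \<in> cc m ` {1..m}"
  then obtain k where k: "k \<in> {1..m}" "z = cc m k" by auto
  have "poly (\<Prod>k\<in>{1..m}. [:-cc m k, 1:]) z = 0"
    using k by (auto simp: poly_prod)
  moreover have "poly (P m) z = 0" using k P_root by auto
  ultimately show "poly (P m) z = poly (\<Prod>k\<in>{1..m}. [:-cc m k, 1:]) z" by simp
qed

lemma H_eval: "poly (H m 2) (-(u^2)) = poly (P m) u * poly (P m) (-u)"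
proof -
  have "poly (H m 2) (-(u^2)) = (\<Prod>k\<in>{1..m}. (u - cc m k) * (-u - cc m k))"
    unfolding H_def cc_def by (auto simp: poly_prod intro!: prod.cong simp: algebra_simps power2_eq_square)
  also have "\<dots> = (\<Prod>k\<in>{1..m}. poly [:-cc m k, 1:] u * poly [:-cc m k, 1:] (-u))"
    by (simp add: algebra_simps)
  also have "\<dots> = poly (P m) u * poly (P m) (-u)"
    unfolding P_prod poly_prod prod.distrib by simp
  finally show ?thesis .
qed

lemma ring_id:
  fixes u p0 p1 q0 q1 :: real
  shows "let p2 = (u-2)*p1 - p0; q2 = (-u-2)*q1 - q0;
             p3 = (u-2)*p2 - p1; q3 = (-u-2)*q2 - q1;
             p4 = (u-2)*p3 - p2; q4 = (-u-2)*q3 - q2 in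
   p4*q4 + (u^2-4) * (p3*q3) + (6+2*u^2) * (p2*q2) + (u^2-4) * (p1*q1) + p0*q0 = 0"
  unfolding Let_def by algebra

lemma PS: "poly (P (Suc (Suc k))) v = (v-2) * poly (P (Suc k)) v - poly (P k) v"
  by (simp add: algebra_simps)

lemma e_rec:
  fixes u :: real
  shows "poly (P (n+4)) u * poly (P (n+4)) (-u) + (u^2-4) * (poly (P (n+3)) u * poly (P (n+3)) (-u))
    + (6+2*u^2) * (poly (P (n+2)) u * poly (P (n+2)) (-u)) + (u^2-4) * (poly (P (n+1)) u * poly (P (n+1)) (-u))
    + poly (P n) u * poly (P n) (-u) = 0"
proof -
  have a: "n+2 = Suc (Suc n)" "n+3 = Suc (Suc (Suc n))" "n+4 = Suc (Suc (Suc (Suc n)))" "n+1 = Suc n" by simp_all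
  have h2: "poly (P (Suc (Suc n))) u = (u-2) * poly (P (Suc n)) u - poly (P n) u"
     "poly (P (Suc (Suc n))) (-u) = (-u-2) * poly (P (Suc n)) (-u) - poly (P n) (-u)"
    by (rule PS)+
  have h3: "poly (P (Suc (Suc (Suc n)))) u = (u-2) * poly (P (Suc (Suc n))) u - poly (P (Suc n)) u"
     "poly (P (Suc (Suc (Suc n)))) (-u) = (-u-2) * poly (P (Suc (Suc n))) (-u) - poly (P (Suc n)) (-u)"
    by (rule PS)+
  have h4: "poly (P (Suc (Suc (Suc (Suc n))))) u = (u-2) * poly (P (Suc (Suc (Suc n)))) u - poly (P (Suc (Suc n))) u"
     "poly (P (Suc (Suc (Suc (Suc n))))) (-u) = (-u-2) * poly (P (Suc (Suc (Suc n)))) (-u) - poly (P (Suc (Suc n))) (-u)"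
    by (rule PS)+
  show ?thesis
    using ring_id[of u "poly (P (Suc n)) u" "poly (P n) u" "poly (P (Suc n)) (-u)" "poly (P n) (-u)"]
    unfolding a Let_def h4 h3 h2 .
qed

lemma poly_eq_neg:
  fixes p q :: "real poly"
  assumes "\<And>u. poly p (-(u^2)) = poly q (-(u^2))"
  shows "p = q"
proof (rule ccontr)
  assume "p \<noteq> q"
  hence "p - q \<noteq> 0" by simp
  hence f: "finite {x. poly (p - q) x = 0}" by (rule poly_roots_finite)
  have "{..0::real} \<subseteq> {x. poly (p - q) x = 0}"
  proof
    fix x :: real assume "x \<in> {..0}"
    hence x: "x = - ((sqrt (- x)) ^ 2)" by simp
    have "poly p x = poly q x" by (subst x, subst (2) x, rule assms)
    thus "x \<in> {x. poly (p - q) x = 0}" by simp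
  qed
  with f infinite_Iic show False using finite_subset by blast
qed


lemma P0: "poly (P 0) v = 1" by simp
lemma P1: "poly (P (Suc 0)) v = v - 1" by simp
lemma P2: "poly (P 2) v = v^2 - 3*v + 1"
  by (simp add: eval_nat_numeral algebra_simps power2_eq_square)
lemma P3: "poly (P 3) v = v^3 - 5*v^2 + 6*v - 1"
proof -
  have "poly (P 3) v = (v-2) * poly (P 2) v - poly (P 1) v" using PS[of 1 v] by (simp add: eval_nat_numeral)
  thus ?thesis unfolding P2 by (simp add: algebra_simps power2_eq_square power3_eq_cube)
qed

theorem proposition4p1:
  fixes t x :: "real poly fps"
  defines "t \<equiv> fps_X" and "x \<equiv> fps_const [:0, 1:]"
  shows "((1 - t) ^ 4 - x * t * (t + 1) ^ 2) * Abs_fps (\<lambda>m. H m 2) = (1 - t) ^ 3"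
proof -
  define A where "A = Abs_fps (\<lambda>m. H m 2)"
  define c1 where "c1 = ([:-4,-1:] :: real poly)"
  define c2 where "c2 = ([:6,-2:] :: real poly)"
  have pc1: "poly c1 y = -4 - y" for y unfolding c1_def by simp
  have pc2: "poly c2 y = 6 - 2*y" for y unfolding c2_def by simp
  have c1: "c1 = - 4 - [:0,1:]" unfolding c1_def by (simp add: numeral_poly)
  have c2: "c2 = 6 - 2 * [:0,1:]" unfolding c2_def by (simp add: numeral_poly)
  have D: "(1 - t)^4 - x*t*(t+1)^2 = 1 + fps_const c1 * t + fps_const c2 * t^2 + fps_const c1 * t^3 + t^4"
  proof -
    have f1: "fps_const c1 = -4 - x" unfolding c1 x_def by (simp add: neg_numeral_fps_const)
    have f2: "fps_const c2 = 6 - 2 * x" unfolding c2 x_def by (simp add: numeral_fps_const)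
    show ?thesis unfolding f1 f2 by algebra
  qed
  have R: "(1-t)^3 = 1 + fps_const (-3) * t + fps_const 3 * t^2 + fps_const (-1) * t^3"
  proof -
    have "fps_const (-3) = (-3 :: real poly fps)" "fps_const (-1) = (-1 :: real poly fps)"
      "fps_const 3 = (3 :: real poly fps)"
      by (simp_all add: neg_numeral_fps_const numeral_fps_const fps_const_neg[symmetric] del: fps_const_neg)
    then have "?thesis \<longleftrightarrow> (1 - t)^3 = 1 - 3 * t + 3 * t^2 - t^3" by simp
    moreover have "(1 - t)^3 = 1 - 3 * t + 3 * t^2 - t^3" by algebra
    ultimately show ?thesis by simp
  qed
  show ?thesis unfolding A_def[symmetric] D R
  proof (rule fps_ext)
    fix n
    have L: "((1 + fps_const c1 * t + fps_const c2 * t^2 + fps_const c1 * t^3 + t^4) * A) $ n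
      = H n 2 + c1 * (if n < 1 then 0 else H (n-1) 2) + c2 * (if n < 2 then 0 else H (n-2) 2)
        + c1 * (if n < 3 then 0 else H (n-3) 2) + (if n < 4 then 0 else H (n-4) 2)"
      by (simp add: t_def A_def distrib_right mult.assoc fps_X_power_mult_nth fps_X_mult_nth)
    have Rn: "(1 + fps_const (-3) * t + fps_const 3 * t^2 + fps_const (-1) * t^3) $ n
      = (if n = 0 then 1 else 0) + (if n = 1 then -3 else 0) + (if n = 2 then 3 else 0) + (if n = 3 then -1 else 0)"
      by (simp add: t_def fps_X_power_nth)
    have key: "H n 2 + c1 * (if n < 1 then 0 else H (n-1) 2) + c2 * (if n < 2 then 0 else H (n-2) 2)
        + c1 * (if n < 3 then 0 else H (n-3) 2) + (if n < 4 then 0 else H (n-4) 2)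
      = (if n = 0 then 1 else 0) + (if n = 1 then -3 else 0) + (if n = 2 then 3 else 0) + (if n = 3 then -1 else 0)"
    proof -
      have "n = 0 \<or> n = 1 \<or> n = 2 \<or> n = 3 \<or> (\<exists>m. n = m + 4)" by presburger
      then consider "n = 0" | "n = 1" | "n = 2" | "n = 3" | m where "n = m + 4" by blast
      then show ?thesis
      proof cases
        case 1 then show ?thesis by (simp add: H_def)
      next
        case 2 then show ?thesis apply (simp) apply (rule poly_eq_neg) apply (simp add: H_eval pc1 pc2 P0 P1 P2 P3 del: P.simps) by (simp add: algebra_simps power2_eq_square power3_eq_cube)
      next
        case 3 then show ?thesis apply (simp) apply (rule poly_eq_neg) apply (simp add: H_eval pc1 pc2 P0 P1 P2 P3 del: P.simps) by (simp add: algebra_simps power2_eq_square power3_eq_cube)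
      next
        case 4 then show ?thesis apply (simp) apply (rule poly_eq_neg) apply (simp add: H_eval pc1 pc2 P0 P1 P2 P3 del: P.simps) by (simp add: algebra_simps power2_eq_square power3_eq_cube)
      next
        case 5 then show ?thesis apply (simp) apply (rule poly_eq_neg) subgoal for u using e_rec[of m u] by (simp add: H_eval pc1 pc2 add.commute[of 3 m] del: P.simps) done
      qed
    qed
    show "((1 + fps_const c1 * t + fps_const c2 * t^2 + fps_const c1 * t^3 + t^4) * A) $ n =
      (1 + fps_const (-3) * t + fps_const 3 * t^2 + fps_const (-1) * t^3) $ n"
      unfolding L Rn by (rule key)
  qed
qed

end
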